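(* Let $\mathbf{L},\mathbf{L}'\subseteq\mathbb{N}^n$ be directed hybridlinear sets with a non-degenerate intersection. Then $\mathbf{L}\cap\mathbf{L}'$ is directed hybridlinear.
   Context: Hybridlinear: $\mathbf{B}+\mathbb{N}(\mathbf{F})$ with $\mathbf{B},\mathbf{F}\subseteq\mathbb{N}^n$ finite. Preservants: $\mathbf{P}_{\mathbf{X}}=\{\mathbf{p}\in\mathbb{Z}^n\mid\mathbf{X}+\mathbf{p}\subseteq\mathbf{X}\}$; $\mathbf{x}\le_{\mathbf{P}}\mathbf{y}$ iff $\mathbf{y}-\mathbf{x}\in\mathbf{P}$. $\mathbf{X}$ is directed hybridlinear if $(\mathbf{X},\le_{\mathbf{P}_{\mathbf{X}}})$ is a well-quasi-order (well-founded, every subset has finitely many minimal elements) in which any two elements have a common upper bound. Dimension of $\mathbf{X}\subseteq\mathbb{Q}^n$: least $k$ such that $\mathbf{X}$ is covered by finitely many sets $\mathbf{b}_i+\mathbf{V}_i$, $\mathbf{V}_i$ vector subspaces of dimension $\le k$. $\mathbf{X}_1,\mathbf{X}_2$ have non-degenerate intersection if $\dim(\mathbf{X}_1\cap\mathbf{X}_2)=\dim(\mathbf{X}_1)=\dim(\mathbf{X}_2)$. *)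

theory Defs
  imports "HOL-Analysis.Analysis"
begin

text \<open>Vectors of \<open>\<int>^n\<close> are \<open>int ^ 'n\<close>; \<open>\<nat>^n\<close> is the subset of componentwise
  non-negative vectors; \<open>\<rat>^n\<close> is \<open>rat ^ 'n\<close>.\<close>

definition natvecs :: "(int ^ 'n) set" where
  "natvecs = {x. \<forall>i. 0 \<le> x $ i}"

definition Nspan :: "(int ^ 'n) set \<Rightarrow> (int ^ 'n) set" where
  "Nspan F = {\<Sum>f\<in>F. of_nat (c f) *s f | c :: int ^ 'n \<Rightarrow> nat. True}"

definition hybridlinear :: "(int ^ 'n) set \<Rightarrow> bool" where
  "hybridlinear X \<longleftrightarrow> (\<exists>B F. finite B \<and> finite F \<and> B \<subseteq> natvecs \<and> F \<subseteq> natvecs \<and>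
      X = {b + v | b v. b \<in> B \<and> v \<in> Nspan F})"

definition preservants :: "(int ^ 'n) set \<Rightarrow> (int ^ 'n) set" where
  "preservants X = {p. \<forall>x\<in>X. x + p \<in> X}"

definition ple :: "(int ^ 'n) set \<Rightarrow> int ^ 'n \<Rightarrow> int ^ 'n \<Rightarrow> bool" where
  "ple P x y \<longleftrightarrow> y - x \<in> P"

definition wqo_on :: "'a set \<Rightarrow> ('a \<Rightarrow> 'a \<Rightarrow> bool) \<Rightarrow> bool" where
  "wqo_on X le \<longleftrightarrow>
     (\<not> (\<exists>f :: nat \<Rightarrow> 'a. \<forall>k. f k \<in> X \<and> le (f (Suc k)) (f k) \<and> \<not> le (f k) (f (Suc k)))) \<and>
     (\<forall>S \<subseteq> X. finite {x \<in> S. \<forall>y \<in> S. le y x \<longrightarrow> le x y})"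

definition directed_hybridlinear :: "(int ^ 'n) set \<Rightarrow> bool" where
  "directed_hybridlinear X \<longleftrightarrow> hybridlinear X \<and>
     wqo_on X (ple (preservants X)) \<and>
     (\<forall>x\<in>X. \<forall>y\<in>X. \<exists>z\<in>X. ple (preservants X) x z \<and> ple (preservants X) y z)"

definition to_rat :: "int ^ 'n \<Rightarrow> rat ^ 'n" where
  "to_rat x = (\<chi> i. of_int (x $ i))"

definition qdim :: "(rat ^ 'n) set \<Rightarrow> nat" where
  "qdim X = (LEAST k. \<exists>(m::nat) (b :: nat \<Rightarrow> rat ^ 'n) (V :: nat \<Rightarrow> (rat ^ 'n) set).
      (\<forall>i<m. vec.subspace (V i) \<and> vec.dim (V i) \<le> k) \<and>
      X \<subseteq> (\<Union>i<m. (\<lambda>v. b i + v) ` V i))"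

definition zdim :: "(int ^ 'n) set \<Rightarrow> nat" where
  "zdim X = qdim (to_rat ` X)"

definition nondegenerate_intersection :: "(int ^ 'n) set \<Rightarrow> (int ^ 'n) set \<Rightarrow> bool" where
  "nondegenerate_intersection X1 X2 \<longleftrightarrow>
     zdim (X1 \<inter> X2) = zdim X1 \<and> zdim X1 = zdim X2"

end

theory Submission
  imports Defs
begin



lemma Nspan_zero: "0 \<in> Nspan F"
  unfolding Nspan_def by (rule CollectI, rule exI[of _ "\<lambda>_. 0"]) simp

lemma Nspan_add:
  assumes "x \<in> Nspan F" "y \<in> Nspan F" shows "x + y \<in> Nspan F"
proof -
  obtain c where c: "x = (\<Sum>f\<in>F. of_nat (c f) *s f)" using assms(1) unfolding Nspan_def by auto
  obtain d where d: "y = (\<Sum>f\<in>F. of_nat (d f) *s f)" using assms(2) unfolding Nspan_def by auto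
  have "x + y = (\<Sum>f\<in>F. of_nat ((\<lambda>f. c f + d f) f) *s f)"
    unfolding c d by (simp only: of_nat_add vector_sadd_rdistrib sum.distrib)
  then show ?thesis unfolding Nspan_def by (intro CollectI exI[of _ "\<lambda>f. c f + d f"]) simp
qed

lemma Nspan_base:
  assumes "finite F" "f \<in> F" shows "f \<in> Nspan F"
proof -
  have "(\<Sum>g\<in>F. of_nat ((\<lambda>g. if g = f then 1 else 0) g) *s g) = f"
  proof -
    have "(\<Sum>g\<in>F. of_nat ((\<lambda>g. if g = f then 1 else 0) g) *s g) = (\<Sum>g\<in>F. if g = f then g else 0)"
      by (rule sum.cong) auto
    also have "\<dots> = f" using assms by (simp add: sum.delta)
    finally show ?thesis .
  qed
  then have "\<exists>c. f = (\<Sum>g\<in>F. of_nat (c g) *s g) \<and> True"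
    by (intro exI[of _ "\<lambda>g. if g = f then 1 else 0"]) simp
  then show ?thesis unfolding Nspan_def by simp
qed

lemma Nspan_minimal:
  assumes "finite F" "0 \<in> T" "\<And>x y. x \<in> T \<Longrightarrow> y \<in> T \<Longrightarrow> x + y \<in> T" "F \<subseteq> T"
  shows "Nspan F \<subseteq> T"
proof
  fix x assume "x \<in> Nspan F"
  then obtain c where c: "x = (\<Sum>f\<in>F. of_nat (c f) *s f)" unfolding Nspan_def by auto
  have k: "of_nat k *s f \<in> T" if "f \<in> T" for k f
  proof (induction k)
    case 0 then show ?case using assms(2) by simp
  next
    case (Suc k)
    have "of_nat (Suc k) *s f = f + of_nat k *s f" by (simp add: vector_sadd_rdistrib)
    then show ?case using assms(3) Suc that by simp
  qed
  have "(\<Sum>f\<in>G. of_nat (c f) *s f) \<in> T" if "G \<subseteq> F" for G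
    using finite_subset[OF that assms(1)] that
  proof (induction G rule: finite_induct)
    case empty then show ?case using assms(2) by simp
  next
    case (insert g G) then show ?case using assms(3,4) k by auto
  qed
  then show "x \<in> T" using c by auto
qed

lemma Nspan_scale:
  assumes "x \<in> Nspan F" shows "of_nat k *s x \<in> Nspan F"
proof (induction k)
  case 0 then show ?case using Nspan_zero by simp
next
  case (Suc k)
  have "of_nat (Suc k) *s x = x + of_nat k *s x" by (simp add: vector_sadd_rdistrib)
  then show ?case using Nspan_add[OF assms Suc] by simp
qed

lemma Nspan_sum:
  assumes "\<And>i. i \<in> I \<Longrightarrow> g i \<in> Nspan F" shows "sum g I \<in> Nspan F"
  using assms
proof (induction I rule: infinite_finite_induct)
  case (infinite A) then show ?case using Nspan_zero by simp
next
  case empty then show ?case using Nspan_zero by simp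
next
  case (insert x F) then show ?case using Nspan_add by auto
qed

lemma Nspan_mono: "finite G \<Longrightarrow> F \<subseteq> Nspan G \<Longrightarrow> finite F \<Longrightarrow> Nspan F \<subseteq> Nspan G"
  by (rule Nspan_minimal) (auto intro: Nspan_zero Nspan_add)

lemma natvecs_add: "x \<in> natvecs \<Longrightarrow> y \<in> natvecs \<Longrightarrow> x + y \<in> natvecs"
  unfolding natvecs_def by auto

lemma Nspan_natvecs: "finite F \<Longrightarrow> F \<subseteq> natvecs \<Longrightarrow> Nspan F \<subseteq> natvecs"
  by (rule Nspan_minimal) (auto simp: natvecs_def)

lemma to_rat_add[simp]: "to_rat (x + y) = to_rat x + to_rat y"
  by (simp add: to_rat_def vec_eq_iff)
lemma to_rat_diff[simp]: "to_rat (x - y) = to_rat x - to_rat y"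
  by (simp add: to_rat_def vec_eq_iff)
lemma to_rat_zero[simp]: "to_rat 0 = 0"
  by (simp add: to_rat_def vec_eq_iff)
lemma to_rat_scale[simp]: "to_rat (k *s x) = of_int k *s to_rat x"
  by (simp add: to_rat_def vec_eq_iff)
lemma to_rat_sum: "to_rat (sum g I) = (\<Sum>i\<in>I. to_rat (g i))"
  by (induction I rule: infinite_finite_induct) auto
lemma to_rat_inj: "inj to_rat"
  by (auto simp: inj_def to_rat_def vec_eq_iff)
lemma to_rat_eq[simp]: "to_rat x = to_rat y \<longleftrightarrow> x = y"
  using to_rat_inj by (auto simp: inj_def)

lemma Nspan_in_span: "x \<in> Nspan F \<Longrightarrow> to_rat x \<in> vec.span (to_rat ` F)"
proof -
  assume "x \<in> Nspan F"
  then obtain c where c: "x = (\<Sum>f\<in>F. of_nat (c f) *s f)" unfolding Nspan_def by auto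
  have "to_rat x = (\<Sum>f\<in>F. to_rat (of_nat (c f) *s f))" unfolding c by (rule to_rat_sum)
  also have "\<dots> \<in> vec.span (to_rat ` F)"
  proof (rule vec.span_sum)
    fix f assume "f \<in> F"
    then have "to_rat f \<in> vec.span (to_rat ` F)" by (simp add: vec.span_base)
    then show "to_rat (of_nat (c f) *s f) \<in> vec.span (to_rat ` F)"
      unfolding to_rat_scale by (rule vec.span_scale)
  qed
  finally show ?thesis .
qed




definition le_on :: "'k set \<Rightarrow> ('k \<Rightarrow> nat) \<Rightarrow> ('k \<Rightarrow> nat) \<Rightarrow> bool" where
  "le_on I a b \<longleftrightarrow> (\<forall>i\<in>I. a i \<le> b i)"

definition supp_in :: "'k set \<Rightarrow> ('k \<Rightarrow> nat) \<Rightarrow> bool" where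
  "supp_in I a \<longleftrightarrow> (\<forall>i. i \<notin> I \<longrightarrow> a i = 0)"

lemma dickson_antichain:
  fixes A :: "('k \<Rightarrow> nat) set"
  assumes "finite I" "\<forall>a\<in>A. supp_in I a"
    "\<forall>a\<in>A. \<forall>b\<in>A. le_on I a b \<longrightarrow> a = b"
  shows "finite A"
  using assms
proof (induction "card I" arbitrary: I A rule: less_induct)
  case less
  show ?case
  proof (cases "A = {}")
    case True then show ?thesis by simp
  next
    case False
    then obtain a0 where a0: "a0 \<in> A" by auto
    define Aiv where "Aiv i v = {a\<in>A. a i = v}" for i v
    have sub: "A \<subseteq> insert a0 (\<Union>i\<in>I. \<Union>v\<in>{..<a0 i}. Aiv i v)"
    proof
      fix a assume a: "a \<in> A"
      show "a \<in> insert a0 (\<Union>i\<in>I. \<Union>v\<in>{..<a0 i}. Aiv i v)"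
      proof (cases "a = a0")
        case True then show ?thesis by simp
      next
        case False
        then have "\<not> le_on I a0 a" using less.prems(3) a a0 by auto
        then obtain i where "i \<in> I" "a i < a0 i" unfolding le_on_def by (auto simp: not_le)
        then show ?thesis using a unfolding Aiv_def by auto
      qed
    qed
    have fin: "finite (Aiv i v)" if i: "i \<in> I" for i v
    proof -
      define h where "h a = a(i := 0)" for a :: "'k \<Rightarrow> nat"
      have inj: "inj_on h (Aiv i v)"
      proof (rule inj_onI)
        fix a b assume ab: "a \<in> Aiv i v" "b \<in> Aiv i v" "h a = h b"
        show "a = b"
        proof
          fix j show "a j = b j"
          proof (cases "j = i")
            case True then show ?thesis using ab(1,2) unfolding Aiv_def by simp
          next
            case False then show ?thesis using fun_cong[OF ab(3), of j] unfolding h_def by simp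
          qed
        qed
      qed
      have "finite (h ` Aiv i v)"
      proof (rule less.hyps[of "I - {i}"])
        show "card (I - {i}) < card I" using i less.prems(1) by (metis card_Diff1_less)
        show "finite (I - {i})" using less.prems(1) by simp
        show "\<forall>a\<in>h ` Aiv i v. supp_in (I - {i}) a"
          using less.prems(2) unfolding Aiv_def h_def supp_in_def by auto
        show "\<forall>a\<in>h ` Aiv i v. \<forall>b\<in>h ` Aiv i v. le_on (I - {i}) a b \<longrightarrow> a = b"
        proof (intro ballI impI)
          fix a' b' assume "a' \<in> h ` Aiv i v" "b' \<in> h ` Aiv i v" and le: "le_on (I - {i}) a' b'"
          then obtain a b where ab: "a \<in> Aiv i v" "b \<in> Aiv i v" "a' = h a" "b' = h b" by auto
          have "le_on I a b"
            unfolding le_on_def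
          proof
            fix j assume "j \<in> I"
            show "a j \<le> b j"
            proof (cases "j = i")
              case True then show ?thesis using ab unfolding Aiv_def by simp
            next
              case False then show ?thesis using le ab \<open>j \<in> I\<close> unfolding le_on_def h_def by auto
            qed
          qed
          then have "a = b" using less.prems(3) ab unfolding Aiv_def by auto
          then show "a' = b'" using ab by simp
        qed
      qed
      then show ?thesis using inj by (rule finite_imageD)
    qed
    have "finite (insert a0 (\<Union>i\<in>I. \<Union>v\<in>{..<a0 i}. Aiv i v))"
      using fin less.prems(1) by auto
    then show ?thesis using sub by (rule finite_subset[rotated])
  qed
qed

definition minimals :: "'k set \<Rightarrow> ('k \<Rightarrow> nat) set \<Rightarrow> ('k \<Rightarrow> nat) set" where
  "minimals I S = {a\<in>S. \<forall>b\<in>S. le_on I b a \<longrightarrow> b = a}"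

lemma minimals_finite:
  assumes "finite I" "\<forall>a\<in>S. supp_in I a"
  shows "finite (minimals I S)"
  by (rule dickson_antichain[OF assms(1)]) (use assms(2) in \<open>auto simp: minimals_def\<close>)

lemma le_on_trans: "le_on I a b \<Longrightarrow> le_on I b c \<Longrightarrow> le_on I a c"
  unfolding le_on_def using order_trans by blast

lemma le_on_refl: "le_on I a a"
  unfolding le_on_def by simp

lemma exists_minimal:
  assumes "finite I" "\<forall>a\<in>S. supp_in I a" "a \<in> S"
  shows "\<exists>m\<in>minimals I S. le_on I m a"
proof -
  let ?T = "{b\<in>S. le_on I b a}"
  obtain m where m: "m \<in> ?T" "\<forall>b\<in>?T. sum m I \<le> sum b I"
    using ex_has_least_nat[of "\<lambda>b. b \<in> ?T" a "\<lambda>b. sum b I"] assms(3) le_on_refl by auto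
  have "m \<in> minimals I S"
    unfolding minimals_def
  proof (intro CollectI conjI ballI impI)
    show "m \<in> S" using m by simp
    fix b assume b: "b \<in> S" "le_on I b m"
    then have "b \<in> ?T" using m le_on_trans by auto
    then have s: "sum m I \<le> sum b I" using m by auto
    have "\<forall>i\<in>I. b i = m i"
    proof (rule ccontr)
      assume "\<not> (\<forall>i\<in>I. b i = m i)"
      then obtain i where "i \<in> I" "b i < m i" using b(2) unfolding le_on_def
        using le_neq_implies_less by blast
      then have "sum b I < sum m I"
        using sum_strict_mono_ex1[OF assms(1), of b m] b(2) unfolding le_on_def by blast
      then show False using s by simp
    qed
    moreover have "supp_in I b" "supp_in I m" using assms(2) b m by auto
    ultimately show "b = m" unfolding supp_in_def
      by (intro ext) (case_tac "x \<in> I", auto)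
  qed
  then show ?thesis using m by auto
qed




lemma grid_cover:
  fixes F :: "(int^'n) set" and a :: "nat \<Rightarrow> rat^'n" and U :: "nat \<Rightarrow> (rat^'n) set"
  assumes "finite F" "\<forall>i<m. vec.subspace (U i)"
    "\<forall>x \<in> Nspan F. to_rat (b + x) \<in> (\<Union>i<m. (\<lambda>v. a i + v) ` U i)"
  shows "\<exists>i<m. to_rat b - a i \<in> U i \<and> to_rat ` F \<subseteq> U i"
  using assms(1,3)
proof (induction F arbitrary: b rule: finite_induct)
  case empty
  have "to_rat (b + 0) \<in> (\<Union>i<m. (\<lambda>v. a i + v) ` U i)" by (rule bspec[OF empty.prems Nspan_zero])
  then obtain i where "i < m" "to_rat b \<in> (\<lambda>v. a i + v) ` U i" by auto
  then show ?case by (auto simp: algebra_simps)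
next
  case (insert f F)
  have fin: "finite (insert f F)" using insert by simp
  have sub: "Nspan F \<subseteq> Nspan (insert f F)"
    by (rule Nspan_mono[OF fin]) (use insert Nspan_base[OF fin] in auto)
  have fI: "f \<in> Nspan (insert f F)" using Nspan_base[OF fin] by simp
  have ex: "\<forall>k::nat. \<exists>i<m. to_rat (b + of_nat k *s f) - a i \<in> U i \<and> to_rat ` F \<subseteq> U i"
  proof
    fix k :: nat
    show "\<exists>i<m. to_rat (b + of_nat k *s f) - a i \<in> U i \<and> to_rat ` F \<subseteq> U i"
    proof (rule insert.IH)
      show "\<forall>x\<in>Nspan F. to_rat (b + of_nat k *s f + x) \<in> (\<Union>i<m. (\<lambda>v. a i + v) ` U i)"
      proof
        fix x assume "x \<in> Nspan F"
        then have "of_nat k *s f + x \<in> Nspan (insert f F)"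
          using Nspan_add[OF Nspan_scale[OF fI] subsetD[OF sub]] by blast
        then have "to_rat (b + (of_nat k *s f + x)) \<in> (\<Union>i<m. (\<lambda>v. a i + v) ` U i)"
          by (rule bspec[OF insert.prems])
        then show "to_rat (b + of_nat k *s f + x) \<in> (\<Union>i<m. (\<lambda>v. a i + v) ` U i)"
          by (simp add: add.assoc)
      qed
    qed
  qed
  obtain g where g: "\<And>k. g k < m \<and> to_rat (b + of_nat k *s f) - a (g k) \<in> U (g k) \<and> to_rat ` F \<subseteq> U (g k)"
    using choice[OF ex] by blast
  have "\<not> inj_on g {..m}"
  proof
    assume "inj_on g {..m}"
    then have "card {..m} \<le> card {..<m}"
      by (rule card_inj_on_le) (use g in auto)
    then show False by simp
  qed
  then obtain k1 k2 where k: "k1 \<le> m" "k2 \<le> m" "k1 \<noteq> k2" "g k1 = g k2"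
    unfolding inj_on_def by auto
  define i where "i = g k1"
  have im: "i < m" using g i_def by auto
  have sU: "vec.subspace (U i)" using assms(2) im by auto
  have d1: "to_rat b + of_int (int k1) *s to_rat f - a i \<in> U i" using g[of k1] i_def by simp
  have d2: "to_rat b + of_int (int k2) *s to_rat f - a i \<in> U i" using g[of k2] i_def k(4) by simp
  have "(to_rat b + of_int (int k1) *s to_rat f - a i) - (to_rat b + of_int (int k2) *s to_rat f - a i)
        = (of_int (int k1) - of_int (int k2)) *s to_rat f"
    by (simp add: vector_sadd_rdistrib algebra_simps)
  then have cU: "(of_int (int k1) - of_int (int k2) :: rat) *s to_rat f \<in> U i"
    using vec.subspace_diff[OF sU d1 d2] by simp
  define c where "c = (of_int (int k1) - of_int (int k2) :: rat)"
  have c0: "c \<noteq> 0" using k(3) unfolding c_def by simp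
  have "inverse c *s (c *s to_rat f) \<in> U i"
    using cU unfolding c_def[symmetric] by (rule vec.subspace_scale[OF sU])
  moreover have "inverse c *s (c *s to_rat f) = to_rat f"
    using c0 by (simp only: vector_smult_assoc, simp)
  ultimately have fU: "to_rat f \<in> U i" by simp
  have "to_rat b + of_int (int k1) *s to_rat f - a i - of_int (int k1) *s to_rat f \<in> U i"
    using vec.subspace_diff[OF sU d1 vec.subspace_scale[OF sU fU, of "of_int (int k1)"]] by simp
  then have "to_rat b - a i \<in> U i" by (simp add: algebra_simps)
  then show ?case using im fU g[of k1] i_def by auto
qed

lemma qdim_exists:
  "\<exists>m (b :: nat \<Rightarrow> rat ^ 'n) (V :: nat \<Rightarrow> (rat ^ 'n) set).
      (\<forall>i<m. vec.subspace (V i) \<and> vec.dim (V i) \<le> vec.dim (UNIV :: (rat ^ 'n) set)) \<and>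
      X \<subseteq> (\<Union>i<m. (\<lambda>v. b i + v) ` V i)"
  by (rule exI[of _ 1], rule exI[of _ "\<lambda>_. 0"], rule exI[of _ "\<lambda>_. UNIV"])
     auto

lemma qdim_props:
  "\<exists>m (b :: nat \<Rightarrow> rat ^ 'n) (V :: nat \<Rightarrow> (rat ^ 'n) set).
      (\<forall>i<m. vec.subspace (V i) \<and> vec.dim (V i) \<le> qdim X) \<and>
      X \<subseteq> (\<Union>i<m. (\<lambda>v. b i + v) ` V i)"
  unfolding qdim_def by (rule LeastI_ex, rule exI, rule qdim_exists)

lemma zdim_lower:
  fixes F :: "(int^'n) set"
  assumes "finite F" "\<And>x. x \<in> Nspan F \<Longrightarrow> b + x \<in> X"
  shows "vec.dim (to_rat ` F) \<le> zdim X"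
proof -
  obtain m and a :: "nat \<Rightarrow> rat^'n" and V :: "nat \<Rightarrow> (rat^'n) set" where mV: "\<forall>i<m. vec.subspace (V i) \<and> vec.dim (V i) \<le> qdim (to_rat ` X)"
      "to_rat ` X \<subseteq> (\<Union>i<m. (\<lambda>v. a i + v) ` V i)"
    using qdim_props[of "to_rat ` X"] by (elim exE conjE) blast
  have "\<exists>i<m. to_rat b - a i \<in> V i \<and> to_rat ` F \<subseteq> V i"
  proof (rule grid_cover[OF assms(1)])
    show "\<forall>i<m. vec.subspace (V i)" using mV(1) by simp
    show "\<forall>x\<in>Nspan F. to_rat (b + x) \<in> (\<Union>i<m. (\<lambda>v. a i + v) ` V i)"
    proof
      fix x assume "x \<in> Nspan F"
      then have "to_rat (b + x) \<in> to_rat ` X" by (rule imageI[OF assms(2)])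
      then show "to_rat (b + x) \<in> (\<Union>i<m. (\<lambda>v. a i + v) ` V i)" using mV(2) by (rule subsetD[rotated])
    qed
  qed
  then obtain i where i: "i < m" "to_rat ` F \<subseteq> V i" by (elim exE conjE) simp
  from i(2) have "vec.dim (to_rat ` F) \<le> vec.dim (V i)" by (rule vec.dim_subset)
  moreover have "vec.dim (V i) \<le> qdim (to_rat ` X)" using mV(1) i(1) by simp
  ultimately show ?thesis unfolding zdim_def by linarith
qed

lemma zdim_upper:
  fixes X :: "(int^'n) set"
  assumes "finite C" "vec.subspace W"
    "\<And>x. x \<in> X \<Longrightarrow> \<exists>c\<in>C. to_rat x - to_rat c \<in> W"
  shows "zdim X \<le> vec.dim W"
proof -
  obtain cs where cs: "set cs = C" using finite_list[OF assms(1)] by blast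
  have "to_rat ` X \<subseteq> (\<Union>i<length cs. (\<lambda>v. to_rat (cs ! i) + v) ` W)"
  proof
    fix y assume "y \<in> to_rat ` X"
    then obtain x where x: "x \<in> X" "y = to_rat x" by auto
    then obtain c where c: "c \<in> C" "to_rat x - to_rat c \<in> W" using assms(3) by blast
    then obtain i where i: "i < length cs" "cs ! i = c" using c(1) unfolding cs[symmetric] in_set_conv_nth by blast
    have "y = to_rat (cs ! i) + (to_rat x - to_rat c)" using x i by simp
    then have "y \<in> (\<lambda>v. to_rat (cs ! i) + v) ` W"
      by (rule image_eqI) (use c in simp)
    then show "y \<in> (\<Union>i<length cs. (\<lambda>v. to_rat (cs ! i) + v) ` W)" using i(1)
      by (intro UN_I[of i]) auto
  qed
  note cov = this
  have "\<exists>m (b :: nat \<Rightarrow> rat ^ 'n) (V :: nat \<Rightarrow> (rat ^ 'n) set).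
      (\<forall>i<m. vec.subspace (V i) \<and> vec.dim (V i) \<le> vec.dim W) \<and>
      to_rat ` X \<subseteq> (\<Union>i<m. (\<lambda>v. b i + v) ` V i)"
    apply (rule exI[of _ "length cs"], rule exI[of _ "\<lambda>i. to_rat (cs ! i)"], rule exI[of _ "\<lambda>_. W"])
    using cov assms(2) by simp
  then show ?thesis unfolding zdim_def qdim_def by (rule Least_le)
qed




definition lin :: "(int^'n) set \<Rightarrow> (int^'n) set \<Rightarrow> (int^'n) set" where
  "lin B F = {b + v | b v. b \<in> B \<and> v \<in> Nspan F}"

lemma hybridlinear_lin: "hybridlinear X \<longleftrightarrow> (\<exists>B F. finite B \<and> finite F \<and> B \<subseteq> natvecs \<and> F \<subseteq> natvecs \<and> X = lin B F)"
  unfolding hybridlinear_def lin_def by simp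

lemma vec_sub_rdistrib: "((a::int) - b) *s x = a *s x - b *s x"
  by (simp add: vec_eq_iff algebra_simps)

lemma Nspan_rep:
  assumes "x \<in> Nspan F"
  shows "\<exists>c. (\<forall>f. f \<notin> F \<longrightarrow> c f = 0) \<and> x = (\<Sum>f\<in>F. of_nat (c f) *s f)"
proof -
  obtain c where c: "x = (\<Sum>f\<in>F. of_nat (c f) *s f)" using assms unfolding Nspan_def by auto
  have "x = (\<Sum>f\<in>F. of_nat ((\<lambda>f. if f \<in> F then c f else 0) f) *s f)"
    unfolding c by (rule sum.cong) auto
  then show ?thesis by (intro exI[of _ "\<lambda>f. if f \<in> F then c f else 0"]) auto
qed

lemma Nspan_of_rep: "(\<Sum>f\<in>F. of_nat (c f) *s f) \<in> Nspan F"
  unfolding Nspan_def by blast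

lemma sum_diff_nat:
  assumes "\<forall>f\<in>F. m f \<le> c f"
  shows "(\<Sum>f\<in>F. of_nat (c f - m f) *s (f::int^'n)) = (\<Sum>f\<in>F. of_nat (c f) *s f) - (\<Sum>f\<in>F. of_nat (m f) *s f)"
proof -
  have "(\<Sum>f\<in>F. of_nat (c f - m f) *s f) = (\<Sum>f\<in>F. of_nat (c f) *s f - of_nat (m f) *s f)"
    using assms by (intro sum.cong) (auto simp: of_nat_diff vec_sub_rdistrib)
  then show ?thesis by (simp add: sum_subtractf)
qed

lemma sum_add_nat:
  "(\<Sum>f\<in>F. of_nat (c f + m f) *s (f::int^'n)) = (\<Sum>f\<in>F. of_nat (c f) *s f) + (\<Sum>f\<in>F. of_nat (m f) *s f)"
  by (simp only: of_nat_add vector_sadd_rdistrib sum.distrib)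

definition lsum :: "(int^'n) set \<Rightarrow> ((int^'n) + (int^'n) \<Rightarrow> nat) \<Rightarrow> int^'n" where
  "lsum F c = (\<Sum>f\<in>F. of_nat (c (Inl f)) *s f)"
definition rsum :: "(int^'n) set \<Rightarrow> ((int^'n) + (int^'n) \<Rightarrow> nat) \<Rightarrow> int^'n" where
  "rsum F c = (\<Sum>f\<in>F. of_nat (c (Inr f)) *s f)"

lemma lsum_diff: "le_on (Inl ` F \<union> Inr ` F') m c \<Longrightarrow> lsum F (\<lambda>i. c i - m i) = lsum F c - lsum F m"
  unfolding lsum_def le_on_def by (rule sum_diff_nat) auto
lemma rsum_diff: "le_on (Inl ` F \<union> Inr ` F') m c \<Longrightarrow> rsum F' (\<lambda>i. c i - m i) = rsum F' c - rsum F' m"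
  unfolding rsum_def le_on_def by (rule sum_diff_nat) auto

lemma lsum_in: "lsum F c \<in> Nspan F" unfolding lsum_def by (rule Nspan_of_rep)
lemma rsum_in: "rsum F c \<in> Nspan F" unfolding rsum_def by (rule Nspan_of_rep)

definition combine :: "(int^'n) set \<Rightarrow> (int^'n) set \<Rightarrow> (int^'n \<Rightarrow> nat) \<Rightarrow> (int^'n \<Rightarrow> nat) \<Rightarrow> ((int^'n) + (int^'n) \<Rightarrow> nat)" where
  "combine F F' l r = (\<lambda>i. case i of Inl f \<Rightarrow> (if f \<in> F then l f else 0) | Inr f \<Rightarrow> (if f \<in> F' then r f else 0))"

lemma combine_supp: "supp_in (Inl ` F \<union> Inr ` F') (combine F F' l r)"
  unfolding supp_in_def combine_def by (auto split: sum.split)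

lemma combine_lsum: "lsum F (combine F F' l r) = (\<Sum>f\<in>F. of_nat (l f) *s f)"
  unfolding lsum_def combine_def by (rule sum.cong) auto
lemma combine_rsum: "rsum F' (combine F F' l r) = (\<Sum>f\<in>F'. of_nat (r f) *s f)"
  unfolding rsum_def combine_def by (rule sum.cong) auto

lemma in_both_rep:
  assumes "h \<in> Nspan F" "h' \<in> Nspan F'"
  shows "\<exists>c. supp_in (Inl ` F \<union> Inr ` F') c \<and> lsum F c = h \<and> rsum F' c = h'"
proof -
  obtain l where l: "h = (\<Sum>f\<in>F. of_nat (l f) *s f)" using assms(1) unfolding Nspan_def by auto
  obtain r where r: "h' = (\<Sum>f\<in>F'. of_nat (r f) *s f)" using assms(2) unfolding Nspan_def by auto
  show ?thesis
    by (rule exI[of _ "combine F F' l r"]) (simp add: combine_supp combine_lsum combine_rsum l r)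
qed

lemma sum_le_on_less:
  assumes "finite I" "le_on I m c" "supp_in I m" "m \<noteq> (\<lambda>_. 0)"
  shows "sum (\<lambda>i. c i - m i) I < sum c I"
proof -
  obtain j where j: "m j \<noteq> 0" using assms(4) by auto
  then have jI: "j \<in> I" using assms(3) unfolding supp_in_def by auto
  show ?thesis
  proof (rule sum_strict_mono_ex1[OF assms(1)])
    show "\<forall>x\<in>I. c x - m x \<le> c x" by simp
    show "\<exists>a\<in>I. c a - m a < c a" using jI j assms(2) unfolding le_on_def
      by (intro bexI[of _ j]) auto
  qed
qed

lemma supp_in_diff: "supp_in I c \<Longrightarrow> supp_in I (\<lambda>i. c i - m i)"
  unfolding supp_in_def by simp

lemma Nspan_inter_fg:
  fixes F F' :: "(int^'n) set"
  assumes "finite F" "finite F'"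
  shows "\<exists>G. finite G \<and> Nspan G = Nspan F \<inter> Nspan F'"
proof -
  define I where "I = Inl ` F \<union> Inr ` F'"
  have fI: "finite I" unfolding I_def using assms by simp
  define H where "H = {c. supp_in I c \<and> lsum F c = rsum F' c}"
  define Gm where "Gm = minimals I (H - {\<lambda>_. 0})"
  define G where "G = lsum F ` Gm"
  have fG: "finite G" unfolding G_def Gm_def
    by (rule finite_imageI, rule minimals_finite[OF fI]) (auto simp: H_def)
  have sub1: "Nspan G \<subseteq> Nspan F \<inter> Nspan F'"
  proof (rule Nspan_minimal[OF fG])
    show "0 \<in> Nspan F \<inter> Nspan F'" using Nspan_zero by blast
    show "\<And>x y. x \<in> Nspan F \<inter> Nspan F' \<Longrightarrow> y \<in> Nspan F \<inter> Nspan F' \<Longrightarrow> x + y \<in> Nspan F \<inter> Nspan F'"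
      using Nspan_add by blast
    show "G \<subseteq> Nspan F \<inter> Nspan F'"
    proof
      fix g assume "g \<in> G"
      then obtain c where c: "c \<in> Gm" "g = lsum F c" unfolding G_def by auto
      then have "lsum F c = rsum F' c" unfolding Gm_def minimals_def H_def by auto
      then show "g \<in> Nspan F \<inter> Nspan F'" using c lsum_in[of F c] rsum_in[of F' c] by simp
    qed
  qed
  have main: "lsum F c \<in> Nspan G" if "c \<in> H" for c
    using that
  proof (induction "sum c I" arbitrary: c rule: less_induct)
    case less
    show ?case
    proof (cases "c = (\<lambda>_. 0)")
      case True then show ?thesis by (simp add: lsum_def Nspan_zero)
    next
      case False
      then have cH0: "c \<in> H - {\<lambda>_. 0}" using less.prems by simp
      have supp: "\<forall>a\<in>H - {\<lambda>_. 0}. supp_in I a" unfolding H_def by auto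
      obtain m where m: "m \<in> Gm" "le_on I m c"
        using exists_minimal[OF fI supp cH0] unfolding Gm_def by auto
      have mH: "m \<in> H" "m \<noteq> (\<lambda>_. 0)" using m(1) unfolding Gm_def minimals_def by auto
      define d where "d = (\<lambda>i. c i - m i)"
      have le: "le_on (Inl ` F \<union> Inr ` F') m c" using m(2) unfolding I_def .
      have l1: "lsum F d = lsum F c - lsum F m" unfolding d_def by (rule lsum_diff[OF le])
      have r1: "rsum F' d = rsum F' c - rsum F' m" unfolding d_def by (rule rsum_diff[OF le])
      have "supp_in I d" unfolding d_def using less.prems unfolding H_def by (simp add: supp_in_diff)
      moreover have "lsum F d = rsum F' d" using l1 r1 less.prems mH(1) unfolding H_def by simp
      ultimately have dH: "d \<in> H" unfolding H_def by simp
      have "sum d I < sum c I" unfolding d_def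
        by (rule sum_le_on_less[OF fI m(2)]) (use mH in \<open>simp_all add: H_def\<close>)
      then have "lsum F d \<in> Nspan G" using less.hyps dH by blast
      moreover have "lsum F m \<in> Nspan G" using m(1) Nspan_base[OF fG] unfolding G_def by auto
      moreover have "lsum F c = lsum F m + lsum F d" using l1 by simp
      ultimately show ?thesis using Nspan_add by simp
    qed
  qed
  have "Nspan F \<inter> Nspan F' \<subseteq> Nspan G"
  proof
    fix h assume "h \<in> Nspan F \<inter> Nspan F'"
    then obtain c where c: "supp_in I c" "lsum F c = h" "rsum F' c = h"
      using in_both_rep[of h F h F'] unfolding I_def by auto
    then have "c \<in> H" unfolding H_def by simp
    then have "lsum F c \<in> Nspan G" by (rule main)
    then show "h \<in> Nspan G" using c(2) by simp
  qed
  then show ?thesis using sub1 fG by blast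
qed




lemma lin_add: "x \<in> lin B F \<Longrightarrow> v \<in> Nspan F \<Longrightarrow> x + v \<in> lin B F"
proof -
  assume "x \<in> lin B F" "v \<in> Nspan F"
  then obtain b u where "b \<in> B" "u \<in> Nspan F" "x = b + u" unfolding lin_def by auto
  then have "x + v = b + (u + v)" "u + v \<in> Nspan F" using Nspan_add \<open>v \<in> Nspan F\<close> by (auto simp: add.assoc)
  then show ?thesis using \<open>b \<in> B\<close> unfolding lin_def by blast
qed

lemma lin_memI: "b \<in> B \<Longrightarrow> v \<in> Nspan F \<Longrightarrow> b + v \<in> lin B F"
  unfolding lin_def by blast

lemma inter_decomp:
  fixes B F B' F' :: "(int^'n) set"
  assumes "finite B" "finite F" "finite B'" "finite F'"
  shows "\<exists>C. finite C \<and> C \<subseteq> lin B F \<inter> lin B' F' \<and>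
     (\<forall>x \<in> lin B F \<inter> lin B' F'. \<exists>c\<in>C. x - c \<in> Nspan F \<inter> Nspan F')"
proof -
  define I where "I = Inl ` F \<union> Inr ` F'"
  have fI: "finite I" unfolding I_def using assms by simp
  define S where "S b b' = {c. supp_in I c \<and> b + lsum F c = b' + rsum F' c}" for b b'
  define C where "C = (\<lambda>(p,c). fst p + lsum F c) ` (Sigma (B \<times> B') (\<lambda>p. minimals I (S (fst p) (snd p))))"
  have "finite C" unfolding C_def
  proof (rule finite_imageI, rule finite_SigmaI)
    show "finite (B \<times> B')" using assms by simp
    show "finite (minimals I (S (fst p) (snd p)))" for p
      by (rule minimals_finite[OF fI]) (simp add: S_def)
  qed
  moreover have "C \<subseteq> lin B F \<inter> lin B' F'"
  proof
    fix y assume "y \<in> C"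
    then obtain b b' c where bc: "b \<in> B" "b' \<in> B'" "c \<in> minimals I (S b b')" "y = b + lsum F c"
      unfolding C_def by auto
    then have "c \<in> S b b'" unfolding minimals_def by simp
    then have y2: "y = b' + rsum F' c" using bc(4) unfolding S_def by simp
    have "y \<in> lin B F" unfolding bc(4) by (rule lin_memI[OF bc(1) lsum_in])
    moreover have "y \<in> lin B' F'" unfolding y2 by (rule lin_memI[OF bc(2) rsum_in])
    ultimately show "y \<in> lin B F \<inter> lin B' F'" by simp
  qed
  moreover have "\<exists>c\<in>C. x - c \<in> Nspan F \<inter> Nspan F'" if x: "x \<in> lin B F \<inter> lin B' F'" for x
  proof -
    obtain b v where bv: "b \<in> B" "v \<in> Nspan F" "x = b + v" using x unfolding lin_def by auto
    obtain b' v' where bv': "b' \<in> B'" "v' \<in> Nspan F'" "x = b' + v'" using x unfolding lin_def by auto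
    obtain c where c: "supp_in I c" "lsum F c = v" "rsum F' c = v'"
      using in_both_rep[OF bv(2) bv'(2)] unfolding I_def by auto
    have cS: "c \<in> S b b'" unfolding S_def using c bv bv' by simp
    have supp: "\<forall>a\<in>S b b'. supp_in I a" unfolding S_def by simp
    obtain m where m: "m \<in> minimals I (S b b')" "le_on I m c"
      using exists_minimal[OF fI supp cS] by auto
    have mS: "b + lsum F m = b' + rsum F' m" using m(1) unfolding minimals_def S_def by simp
    have le: "le_on (Inl ` F \<union> Inr ` F') m c" using m(2) unfolding I_def .
    define y where "y = b + lsum F m"
    have yC: "y \<in> C" unfolding C_def y_def using bv(1) bv'(1) m(1)
      by (intro image_eqI[of _ _ "((b,b'),m)"]) auto
    have e1: "x - y = lsum F (\<lambda>i. c i - m i)" unfolding y_def lsum_diff[OF le] using bv(3) c(2) by simp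
    have e2: "x - y = rsum F' (\<lambda>i. c i - m i)" unfolding y_def mS rsum_diff[OF le] using bv'(3) c(3) by simp
    have "x - y \<in> Nspan F" unfolding e1 by (rule lsum_in)
    moreover have "x - y \<in> Nspan F'" unfolding e2 by (rule rsum_in)
    ultimately have "x - y \<in> Nspan F \<inter> Nspan F'" by simp
    then show ?thesis using yC by blast
  qed
  ultimately show ?thesis by blast
qed

lemma inter_hybrid:
  fixes B F B' F' :: "(int^'n) set"
  assumes "finite B" "finite F" "finite B'" "finite F'"
  obtains C G where "finite C" "finite G" "C \<subseteq> lin B F \<inter> lin B' F'"
    "Nspan G = Nspan F \<inter> Nspan F'" "lin B F \<inter> lin B' F' = lin C G"
    "\<forall>x \<in> lin B F \<inter> lin B' F'. \<exists>c\<in>C. x - c \<in> Nspan F \<inter> Nspan F'"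
proof -
  obtain C where C: "finite C" "C \<subseteq> lin B F \<inter> lin B' F'"
     "\<forall>x \<in> lin B F \<inter> lin B' F'. \<exists>c\<in>C. x - c \<in> Nspan F \<inter> Nspan F'"
    using inter_decomp[OF assms] by blast
  obtain G where G: "finite G" "Nspan G = Nspan F \<inter> Nspan F'"
    using Nspan_inter_fg[OF assms(2,4)] by blast
  have "lin B F \<inter> lin B' F' = lin C G"
  proof
    show "lin B F \<inter> lin B' F' \<subseteq> lin C G"
    proof
      fix x assume "x \<in> lin B F \<inter> lin B' F'"
      then obtain c where "c \<in> C" "x - c \<in> Nspan G" using C(3) G(2) by blast
      then have "c + (x - c) \<in> lin C G" by (rule lin_memI)
      then show "x \<in> lin C G" by simp
    qed
    show "lin C G \<subseteq> lin B F \<inter> lin B' F'"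
    proof
      fix x assume "x \<in> lin C G"
      then obtain c v where cv: "c \<in> C" "v \<in> Nspan G" "x = c + v" unfolding lin_def by auto
      then have "c \<in> lin B F" "c \<in> lin B' F'" "v \<in> Nspan F" "v \<in> Nspan F'" using C(2) G(2) by auto
      then show "x \<in> lin B F \<inter> lin B' F'" using cv(3) lin_add by blast
    qed
  qed
  then show ?thesis using that C G by blast
qed




lemma zero_pres: "0 \<in> preservants X"
  unfolding preservants_def by simp

lemma pres_add: "p \<in> preservants X \<Longrightarrow> q \<in> preservants X \<Longrightarrow> p + q \<in> preservants X"
  unfolding preservants_def by (simp add: add.assoc[symmetric])

lemma pres_iter:
  assumes "x \<in> X" "p \<in> preservants X" shows "x + of_nat k *s p \<in> X"
proof (induction k)
  case 0 then show ?case using assms by simp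
next
  case (Suc k)
  have eq: "x + of_nat (Suc k) *s p = (x + of_nat k *s p) + p" by (simp add: vector_sadd_rdistrib algebra_simps)
  have "(x + of_nat k *s p) + p \<in> X" using Suc assms(2) unfolding preservants_def by blast
  then show ?case unfolding eq .
qed

lemma pres_natvecs:
  assumes "X \<subseteq> natvecs" "x \<in> X" "p \<in> preservants X"
  shows "p \<in> natvecs"
  unfolding natvecs_def
proof (intro CollectI allI)
  fix i
  show "0 \<le> p $ i"
  proof (rule ccontr)
    assume "\<not> 0 \<le> p $ i"
    then have pi: "p $ i \<le> -1" by simp
    define k where "k = Suc (nat (x $ i))"
    have "x + of_nat k *s p \<in> natvecs" using pres_iter[OF assms(2,3)] assms(1) by blast
    then have "0 \<le> x $ i + int k * p $ i" unfolding natvecs_def by simp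
    moreover have "int k * p $ i \<le> - int k" using mult_left_mono[OF pi, of "int k"] by simp
    moreover have "x $ i < int k" unfolding k_def by simp
    ultimately show False by simp
  qed
qed

lemma Nspan_pres: "Nspan G \<subseteq> preservants (lin C G)"
  unfolding preservants_def using lin_add by blast

lemma natvecs_eq:
  assumes "p \<in> natvecs" "-p \<in> natvecs" shows "p = 0"
  using assms unfolding natvecs_def by (simp add: vec_eq_iff order_antisym)

definition gsum :: "(int^'n) set \<Rightarrow> (int^'n \<Rightarrow> nat) \<Rightarrow> int^'n" where
  "gsum G l = (\<Sum>g\<in>G. of_nat (l g) *s g)"

lemma wqo_lin:
  fixes C G :: "(int^'n) set"
  assumes "finite C" "finite G" "lin C G \<subseteq> natvecs"
  shows "wqo_on (lin C G) (ple (preservants (lin C G)))"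
proof -
  define X where "X = lin C G"
  define P where "P = preservants X"
  have XN: "X \<subseteq> natvecs" using assms(3) X_def by simp
  have antisym: "x = y" if "x \<in> X" "ple P x y" "ple P y x" for x y
  proof -
    have "y - x \<in> natvecs" using pres_natvecs[OF XN that(1)] that(2) unfolding ple_def P_def by blast
    moreover have "-(y - x) \<in> natvecs" using pres_natvecs[OF XN that(1)] that(3) unfolding ple_def P_def by simp
    ultimately have "y - x = 0" by (rule natvecs_eq)
    then show ?thesis by simp
  qed
  have part1: "\<not> (\<exists>f :: nat \<Rightarrow> int^'n. \<forall>k. f k \<in> X \<and> ple P (f (Suc k)) (f k) \<and> \<not> ple P (f k) (f (Suc k)))"
  proof
    assume "\<exists>f :: nat \<Rightarrow> int^'n. \<forall>k. f k \<in> X \<and> ple P (f (Suc k)) (f k) \<and> \<not> ple P (f k) (f (Suc k))"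
    then obtain f :: "nat \<Rightarrow> int^'n" where f0: "\<forall>k. f k \<in> X \<and> ple P (f (Suc k)) (f k) \<and> \<not> ple P (f k) (f (Suc k))"
      by (elim exE)
    have f1: "f k \<in> X" for k using f0 by simp
    have f2: "ple P (f (Suc k)) (f k)" for k using f0 by simp
    have f3: "\<not> ple P (f k) (f (Suc k))" for k using f0 by simp
    define \<sigma> where "\<sigma> k = (\<Sum>i\<in>UNIV. f k $ i)" for k
    have step: "\<sigma> (Suc k) < \<sigma> k" for k
    proof -
      define d where "d = f k - f (Suc k)"
      have dP: "d \<in> P" using f2[of k] unfolding ple_def d_def .
      have dN: "d \<in> natvecs" using pres_natvecs[OF XN f1[of k]] dP unfolding P_def by simp
      have "d \<noteq> 0"
      proof
        assume "d = 0"
        then have "f (Suc k) - f k = 0" unfolding d_def by simp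
        then have "f (Suc k) - f k \<in> P" unfolding P_def using zero_pres by simp
        then show False using f3[of k] unfolding ple_def by simp
      qed
      then obtain i where i: "d $ i \<noteq> 0" by (auto simp: vec_eq_iff)
      have nn: "\<And>j. j \<in> UNIV \<Longrightarrow> 0 \<le> d $ j" using dN unfolding natvecs_def by simp
      have "0 < d $ i" using nn[of i] i by simp
      note di = this
      have "0 < (\<Sum>i\<in>UNIV. d $ i)"
        by (rule sum_pos2[of UNIV i "\<lambda>j. d $ j"]) (use di nn in simp_all)
      moreover have "(\<Sum>i\<in>UNIV. d $ i) = \<sigma> k - \<sigma> (Suc k)"
        unfolding d_def \<sigma>_def by (simp add: sum_subtractf)
      ultimately show ?thesis by simp
    qed
    have pos: "0 \<le> \<sigma> k" for k
    proof -
      have "\<forall>i. 0 \<le> f k $ i" using f1[of k] XN unfolding natvecs_def by blast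
      then show ?thesis unfolding \<sigma>_def by (simp add: sum_nonneg)
    qed
    have bound: "\<sigma> k + int k \<le> \<sigma> 0" for k
    proof (induction k)
      case 0 then show ?case by simp
    next
      case (Suc k) then show ?case using step[of k] by simp
    qed
    have "\<sigma> (nat (\<sigma> 0) + 1) + int (nat (\<sigma> 0) + 1) \<le> \<sigma> 0" by (rule bound)
    then show False using pos[of 0] pos[of "nat (\<sigma> 0) + 1"] by simp
  qed
  have part2: "finite {x \<in> S. \<forall>y \<in> S. ple P y x \<longrightarrow> ple P x y}" if S: "S \<subseteq> X" for S
  proof -
    define Mn where "Mn = {x \<in> S. \<forall>y \<in> S. ple P y x \<longrightarrow> ple P x y}"
    define T where "T c = {l. supp_in G l \<and> c + gsum G l \<in> S}" for c
    have "Mn \<subseteq> (\<Union>c\<in>C. (\<lambda>l. c + gsum G l) ` minimals G (T c))"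
    proof
      fix x assume xM: "x \<in> Mn"
      then have xS: "x \<in> S" unfolding Mn_def by simp
      then have "x \<in> X" using S by auto
      then obtain c v where cv: "c \<in> C" "v \<in> Nspan G" "x = c + v" unfolding X_def lin_def by auto
      obtain l where l: "\<forall>f. f \<notin> G \<longrightarrow> l f = 0" "v = gsum G l"
        using Nspan_rep[OF cv(2)] unfolding gsum_def by auto
      have lT: "l \<in> T c" unfolding T_def supp_in_def using l xS cv(3) by simp
      have supp: "\<forall>a\<in>T c. supp_in G a" unfolding T_def by simp
      obtain m where m: "m \<in> minimals G (T c)" "le_on G m l"
        using exists_minimal[OF assms(2) supp lT] by auto
      define y where "y = c + gsum G m"
      have yS: "y \<in> S" using m(1) unfolding minimals_def T_def y_def by simp
      have "x - y = gsum G (\<lambda>g. l g - m g)"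
        unfolding gsum_def y_def cv(3) l(2) using m(2) unfolding le_on_def
        by (subst sum_diff_nat) (auto simp: gsum_def)
      then have "x - y \<in> Nspan G" unfolding gsum_def by (simp add: Nspan_of_rep)
      then have "ple P y x" unfolding ple_def P_def X_def using Nspan_pres by blast
      then have "ple P x y" using xM yS unfolding Mn_def by blast
      then have "x = y" using antisym[OF \<open>x \<in> X\<close>] \<open>ple P y x\<close> by blast
      then show "x \<in> (\<Union>c\<in>C. (\<lambda>l. c + gsum G l) ` minimals G (T c))"
        using cv(1) m(1) unfolding y_def by blast
    qed
    moreover have "finite (\<Union>c\<in>C. (\<lambda>l. c + gsum G l) ` minimals G (T c))"
      using assms(1) by (intro finite_UN_I finite_imageI minimals_finite[OF assms(2)]) (auto simp: T_def)
    ultimately show ?thesis unfolding Mn_def by (rule finite_subset)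
  qed
  have "wqo_on X (ple P)" unfolding wqo_on_def by (intro conjI part1 allI impI part2)
  then show ?thesis unfolding X_def P_def .
qed




lemma pres_scale: "p \<in> preservants X \<Longrightarrow> of_nat k *s p \<in> preservants X"
proof (induction k)
  case 0 then show ?case using zero_pres by simp
next
  case (Suc k)
  have "of_nat (Suc k) *s p = p + of_nat k *s p" by (simp add: vector_sadd_rdistrib)
  then show ?case using pres_add[OF Suc.prems Suc.IH[OF Suc.prems]] by simp
qed

lemma pres_inter: "preservants L \<inter> preservants L' \<subseteq> preservants (L \<inter> L')"
  unfolding preservants_def by blast

lemma pres_span:
  fixes B F :: "(int^'n) set"
  assumes "finite B" "x0 \<in> lin B F" "p \<in> preservants (lin B F)"
  shows "to_rat p \<in> vec.span (to_rat ` F)"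
proof -
  let ?SF = "vec.span (to_rat ` F)"
  have "\<forall>k::nat. \<exists>b. b \<in> B \<and> to_rat (x0 + of_nat k *s p) - to_rat b \<in> ?SF"
  proof
    fix k :: nat
    have "x0 + of_nat k *s p \<in> lin B F" by (rule pres_iter[OF assms(2,3)])
    then obtain b v where "b \<in> B" "v \<in> Nspan F" "x0 + of_nat k *s p = b + v" unfolding lin_def by auto
    then show "\<exists>b. b \<in> B \<and> to_rat (x0 + of_nat k *s p) - to_rat b \<in> ?SF"
      using Nspan_in_span[of v F] by (intro exI[of _ b]) simp
  qed
  then obtain h where h: "\<And>k. h k \<in> B \<and> to_rat (x0 + of_nat k *s p) - to_rat (h k) \<in> ?SF"
    using choice by metis
  have "\<not> inj_on h {..card B}"
  proof
    assume "inj_on h {..card B}"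
    then have "card {..card B} \<le> card B"
      by (rule card_inj_on_le) (use h assms(1) in auto)
    then show False by simp
  qed
  then obtain k1 k2 where k: "k1 \<noteq> k2" "h k1 = h k2" unfolding inj_on_def by auto
  have d1: "to_rat x0 + of_int (int k1) *s to_rat p - to_rat (h k1) \<in> ?SF" using h[of k1] by simp
  have d2: "to_rat x0 + of_int (int k2) *s to_rat p - to_rat (h k1) \<in> ?SF" using h[of k2] k(2) by simp
  have eq: "(to_rat x0 + of_int (int k1) *s to_rat p - to_rat (h k1)) - (to_rat x0 + of_int (int k2) *s to_rat p - to_rat (h k1))
        = (of_int (int k1) - of_int (int k2)) *s to_rat p"
    by (simp add: vector_sadd_rdistrib algebra_simps)
  have cU: "(of_int (int k1) - of_int (int k2) :: rat) *s to_rat p \<in> ?SF"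
    using vec.span_diff[OF d1 d2] unfolding eq .
  define c where "c = (of_int (int k1) - of_int (int k2) :: rat)"
  have c0: "c \<noteq> 0" using k(1) unfolding c_def by simp
  have "inverse c *s (c *s to_rat p) \<in> ?SF"
    using cU unfolding c_def[symmetric] by (rule vec.span_scale)
  moreover have "inverse c *s (c *s to_rat p) = to_rat p"
    using c0 by (simp only: vector_smult_assoc, simp)
  ultimately show ?thesis by simp
qed

lemma denoms:
  fixes r :: "'a \<Rightarrow> rat"
  assumes "finite A"
  shows "\<exists>m::nat. m > 0 \<and> (\<forall>t\<in>A. \<exists>z::int. of_nat m * r t = of_int z)"
  using assms
proof (induction A rule: finite_induct)
  case empty then show ?case by (intro exI[of _ 1]) simp
next
  case (insert t A)
  then obtain m where m: "m > 0" "\<forall>s\<in>A. \<exists>z::int. of_nat m * r s = of_int z" by blast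
  obtain n d where q: "quotient_of (r t) = (n, d)" by (cases "quotient_of (r t)") auto
  have d0: "d > 0" using quotient_of_denom_pos[OF q] .
  have rt: "r t = of_int n / of_int d" using quotient_of_div[OF q] .
  have "of_int d * r t = of_int n" using d0 rt by simp
  define m' where "m' = m * nat d"
  have "m' > 0" unfolding m'_def using m(1) d0 by simp
  moreover have "\<exists>z::int. of_nat m' * r s = of_int z" if "s \<in> insert t A" for s
  proof (cases "s = t")
    case True
    have "of_nat m' * r t = of_nat m * (of_int d * r t)" unfolding m'_def using d0 by simp
    also have "\<dots> = of_int (int m * n)" using \<open>of_int d * r t = of_int n\<close> by simp
    finally show ?thesis using True by blast
  next
    case False
    then have "s \<in> A" using that by simp
    then obtain z where z: "of_nat m * r s = of_int z" using m(2) by blast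
    have "of_nat m' * r s = of_int d * (of_nat m * r s)" unfolding m'_def using d0 by simp
    also have "\<dots> = of_int (d * z)" using z by simp
    finally show ?thesis by blast
  qed
  ultimately show ?case by blast
qed

lemma monoid_comb:
  fixes M :: "(int^'n) set"
  assumes "0 \<in> M" "\<And>x y. x \<in> M \<Longrightarrow> y \<in> M \<Longrightarrow> x + y \<in> M" "finite T" "T \<subseteq> M"
  shows "(\<Sum>t\<in>T. of_nat (c t) *s t) \<in> M"
proof -
  have "(\<Sum>t\<in>T. of_nat (c t) *s t) \<in> Nspan T" by (rule Nspan_of_rep)
  moreover have "Nspan T \<subseteq> M" by (rule Nspan_minimal[OF assms(3,1,2,4)])
  ultimately show ?thesis by blast
qed

lemma push_into:
  fixes M T0 :: "(int^'n) set"
  assumes "0 \<in> M" "\<And>x y. x \<in> M \<Longrightarrow> y \<in> M \<Longrightarrow> x + y \<in> M" "finite T0" "T0 \<subseteq> M"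
    "to_rat v \<in> vec.span (to_rat ` T0)"
  shows "\<exists>m K. m > 0 \<and> of_nat m *s v + of_nat K *s (\<Sum>T0) \<in> M"
proof -
  have fin: "finite (to_rat ` T0)" using assms(3) by simp
  obtain u where u: "to_rat v = (\<Sum>w\<in>to_rat ` T0. u w *s w)"
    using assms(5) unfolding vec.span_finite[OF fin] by auto
  define r where "r t = u (to_rat t)" for t
  have inj: "inj_on to_rat T0" using to_rat_inj by (simp add: inj_on_def)
  have v: "to_rat v = (\<Sum>t\<in>T0. r t *s to_rat t)"
    unfolding u r_def by (simp add: sum.reindex[OF inj])
  obtain m where m: "m > 0" "\<forall>t\<in>T0. \<exists>z::int. of_nat m * r t = of_int z"
    using denoms[OF assms(3)] by blast
  obtain a where a: "\<And>t. t \<in> T0 \<Longrightarrow> of_nat m * r t = of_int (a t)"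
    using m(2) by metis
  have "to_rat (of_nat m *s v) = (\<Sum>t\<in>T0. (of_nat m * r t) *s to_rat t)"
    by (simp add: v vec.scale_sum_right vector_smult_assoc)
  also have "\<dots> = (\<Sum>t\<in>T0. of_int (a t) *s to_rat t)"
    using a by (intro sum.cong) auto
  also have "\<dots> = to_rat (\<Sum>t\<in>T0. a t *s t)"
    by (simp add: to_rat_sum)
  finally have "to_rat (of_nat m *s v) = to_rat (\<Sum>t\<in>T0. a t *s t)" .
  then have mv: "of_nat m *s v = (\<Sum>t\<in>T0. a t *s t)" by (rule injD[OF to_rat_inj])
  define K where "K = (\<Sum>t\<in>T0. nat \<bar>a t\<bar>)"
  have Kge: "\<bar>a t\<bar> \<le> int K" if "t \<in> T0" for t
  proof -
    have "nat \<bar>a t\<bar> \<le> K" unfolding K_def by (rule member_le_sum) (use that assms(3) in auto)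
    then show ?thesis by simp
  qed
  have "of_nat m *s v + of_nat K *s (\<Sum>T0) = (\<Sum>t\<in>T0. (a t + int K) *s t)"
  proof -
    have sK: "of_nat K *s (\<Sum>T0) = (\<Sum>t\<in>T0. of_nat K *s t)"
      by (induction T0 rule: infinite_finite_induct) (simp_all add: vector_add_ldistrib)
    show ?thesis unfolding mv sK by (simp add: vector_sadd_rdistrib sum.distrib)
  qed
  also have "\<dots> = (\<Sum>t\<in>T0. of_nat (nat (a t + int K)) *s t)"
  proof (rule sum.cong[OF refl])
    fix t assume "t \<in> T0"
    then have "0 \<le> a t + int K" using Kge[of t] by linarith
    then show "(a t + int K) *s t = of_nat (nat (a t + int K)) *s t" by simp
  qed
  also have "\<dots> \<in> M" by (rule monoid_comb[OF assms(1-4)])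
  finally show ?thesis using m(1) by blast
qed




lemma transfer_lemma:
  fixes B F F' T0 :: "(int^'n) set"
  assumes "finite T0" "T0 \<subseteq> Nspan F \<inter> Nspan F'" "finite F"
    "vec.span (to_rat ` T0) = vec.span (to_rat ` F)"
    "v \<in> preservants (lin B F)" "finite B" "x0 \<in> lin B F"
  shows "\<exists>t \<in> preservants (lin B F). v + t \<in> Nspan F \<inter> Nspan F'"
proof -
  let ?M = "Nspan F \<inter> Nspan F'"
  have M0: "0 \<in> ?M" using Nspan_zero by blast
  have Madd: "x + y \<in> ?M" if "x \<in> ?M" "y \<in> ?M" for x y using that by (simp add: Nspan_add)
  have "to_rat v \<in> vec.span (to_rat ` F)" by (rule pres_span[OF assms(6,7,5)])
  then have "to_rat v \<in> vec.span (to_rat ` T0)" using assms(4) by simp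
  then obtain m K where mK: "m > 0" "of_nat m *s v + of_nat K *s (\<Sum>T0) \<in> ?M"
    using push_into[OF M0 Madd assms(1,2)] by blast
  define g where "g = (\<Sum>T0)"
  have g1: "g \<in> Nspan F" unfolding g_def by (rule Nspan_sum) (use assms(2) in auto)
  have g2: "g \<in> Nspan F'" unfolding g_def by (rule Nspan_sum) (use assms(2) in auto)
  have gM: "g \<in> ?M" using g1 g2 by simp
  have gP: "g \<in> preservants (lin B F)" using gM Nspan_pres by blast
  obtain m' where m': "m = Suc m'" using mK(1) gr0_conv_Suc by blast
  define t where "t = of_nat m' *s v + of_nat K *s g"
  have tP: "t \<in> preservants (lin B F)" unfolding t_def
    by (rule pres_add[OF pres_scale[OF assms(5)] pres_scale[OF gP]])
  have "v + t = of_nat m *s v + of_nat K *s g"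
  proof -
    have "of_nat (Suc m') *s v = v + of_nat m' *s v" by (simp add: vector_sadd_rdistrib)
    then show ?thesis unfolding t_def m' by (simp add: add.assoc)
  qed
  then have "v + t \<in> ?M" using mK(2) unfolding g_def by simp
  then show ?thesis using tP by blast
qed

lemma combine_dir:
  fixes P P' :: "(int^'n) set"
  assumes Padd: "\<And>x y. x \<in> P \<Longrightarrow> y \<in> P \<Longrightarrow> x + y \<in> P"
    and P'add: "\<And>x y. x \<in> P' \<Longrightarrow> y \<in> P' \<Longrightarrow> x + y \<in> P'"
    and "p1 \<in> P" "q1 \<in> P" "p2 \<in> P'" "q2 \<in> P'" "p1 - q1 = p2 - q2"
    and "t \<in> P'" "q2 + t \<in> P" "t' \<in> P" "q1 + t' \<in> P'"
  shows "p1 + q2 + t + t' \<in> P \<inter> P'" "q1 + q2 + t + t' \<in> P \<inter> P'"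
    "(p1 + q2 + t + t') - (q1 + q2 + t + t') = p1 - q1"
proof -
  have e: "p1 + q2 + t + t' = p2 + (q1 + t') + t" using assms(7) by (simp add: algebra_simps)
  have "p1 + q2 + t + t' = p1 + (q2 + t) + t'" by (simp add: add.assoc)
  then have a1: "p1 + q2 + t + t' \<in> P" using Padd assms by metis
  have a2: "p1 + q2 + t + t' \<in> P'" unfolding e using P'add assms by metis
  have "q1 + q2 + t + t' = (q2 + t) + q1 + t'" by (simp add: algebra_simps)
  then have b1: "q1 + q2 + t + t' \<in> P" using Padd assms by metis
  have "q1 + q2 + t + t' = (q1 + t') + q2 + t" by (simp add: algebra_simps)
  then have b2: "q1 + q2 + t + t' \<in> P'" using P'add assms by metis
  show "p1 + q2 + t + t' \<in> P \<inter> P'" using a1 a2 by simp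
  show "q1 + q2 + t + t' \<in> P \<inter> P'" using b1 b2 by simp
  show "(p1 + q2 + t + t') - (q1 + q2 + t + t') = p1 - q1" by simp
qed




lemma span_eq_W:
  fixes B F F' C :: "(int^'n) set"
  assumes "finite B" "b \<in> B" "finite F" "finite C"
    "\<forall>x \<in> X. \<exists>c\<in>C. x - c \<in> Nspan F \<inter> Nspan F'"
    "zdim X = zdim (lin B F)"
  shows "vec.span (to_rat ` (Nspan F \<inter> Nspan F')) = vec.span (to_rat ` F)"
proof -
  define W where "W = vec.span (to_rat ` (Nspan F \<inter> Nspan F'))"
  have up: "zdim X \<le> vec.dim W"
  proof (rule zdim_upper[OF assms(4)])
    show "vec.subspace W" unfolding W_def by simp
    fix x assume "x \<in> X"
    then obtain c where c: "c \<in> C" "x - c \<in> Nspan F \<inter> Nspan F'" using assms(5) by blast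
    have "to_rat (x - c) \<in> W" unfolding W_def using c(2) by (intro vec.span_base imageI)
    then show "\<exists>c\<in>C. to_rat x - to_rat c \<in> W" using c(1) by auto
  qed
  have low: "vec.dim (to_rat ` F) \<le> zdim (lin B F)"
    by (rule zdim_lower[OF assms(3)]) (rule lin_memI[OF assms(2)])
  have sub: "W \<subseteq> vec.span (to_rat ` F)"
    unfolding W_def
  proof (rule vec.span_minimal)
    show "to_rat ` (Nspan F \<inter> Nspan F') \<subseteq> vec.span (to_rat ` F)"
      using Nspan_in_span by blast
    show "vec.subspace (vec.span (to_rat ` F))" by simp
  qed
  have "W = vec.span (to_rat ` F)"
  proof (rule vec.subspace_dim_equal)
    show "vec.subspace W" unfolding W_def by simp
    show "vec.subspace (vec.span (to_rat ` F))" by simp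
    show "W \<subseteq> vec.span (to_rat ` F)" by (rule sub)
    show "vec.dim (vec.span (to_rat ` F)) \<le> vec.dim W" using up low assms(6) by simp
  qed
  then show ?thesis unfolding W_def .
qed

lemma basis_T0:
  fixes M :: "(int^'n) set"
  obtains T0 where "finite T0" "T0 \<subseteq> M" "vec.span (to_rat ` T0) = vec.span (to_rat ` M)"
proof -
  obtain B0 where B0: "B0 \<subseteq> to_rat ` M" "vec.independent B0" "to_rat ` M \<subseteq> vec.span B0"
    using vec.maximal_independent_subset by blast
  have fB0: "finite B0" using B0(2) by (rule vec.finiteI_independent)
  obtain T0 where T0: "T0 \<subseteq> M" "finite T0" "B0 = to_rat ` T0"
    using finite_subset_image[OF fB0 B0(1)] by blast
  have "vec.span (to_rat ` T0) = vec.span (to_rat ` M)"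
  proof
    show "vec.span (to_rat ` T0) \<subseteq> vec.span (to_rat ` M)"
      using T0(1) by (intro vec.span_mono image_mono)
    show "vec.span (to_rat ` M) \<subseteq> vec.span (to_rat ` T0)"
      using B0(3) T0(3) by (intro vec.span_minimal) simp_all
  qed
  then show ?thesis using that T0 by blast
qed

theorem mainTheorem16:
  fixes L L' :: "(int ^ 'n) set"
  assumes "L \<subseteq> natvecs" and "L' \<subseteq> natvecs"
    and "directed_hybridlinear L" and "directed_hybridlinear L'"
    and "nondegenerate_intersection L L'"
  shows "directed_hybridlinear (L \<inter> L')"
proof -
  obtain B F where BF: "finite B" "finite F" "B \<subseteq> natvecs" "F \<subseteq> natvecs" "L = lin B F"
    using assms(3) unfolding directed_hybridlinear_def hybridlinear_lin by blast
  obtain B' F' where BF': "finite B'" "finite F'" "B' \<subseteq> natvecs" "F' \<subseteq> natvecs" "L' = lin B' F'"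
    using assms(4) unfolding directed_hybridlinear_def hybridlinear_lin by blast
  obtain C G where CG: "finite C" "finite G" "C \<subseteq> lin B F \<inter> lin B' F'"
    "Nspan G = Nspan F \<inter> Nspan F'" "lin B F \<inter> lin B' F' = lin C G"
    and dec: "\<forall>x \<in> lin B F \<inter> lin B' F'. \<exists>c\<in>C. x - c \<in> Nspan F \<inter> Nspan F'"
    using inter_hybrid[OF BF(1,2) BF'(1,2)] by blast
  define X where "X = L \<inter> L'"
  have XCG: "X = lin C G" unfolding X_def BF(5) BF'(5) CG(5) ..
  have XN: "X \<subseteq> natvecs" unfolding X_def using assms(1) by blast
  have hyb: "hybridlinear X"
    unfolding hybridlinear_lin
  proof (intro exI conjI)
    show "finite C" "finite G" by (rule CG(1), rule CG(2))
    show "C \<subseteq> natvecs" using CG(3) XN unfolding X_def BF(5) BF'(5) by blast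
    have "G \<subseteq> Nspan G" using Nspan_base[OF CG(2)] by blast
    also have "\<dots> \<subseteq> Nspan F" unfolding CG(4) by blast
    also have "\<dots> \<subseteq> natvecs" by (rule Nspan_natvecs[OF BF(2,4)])
    finally show "G \<subseteq> natvecs" .
    show "X = lin C G" by (rule XCG)
  qed
  have wqo: "wqo_on X (ple (preservants X))"
    unfolding XCG by (rule wqo_lin[OF CG(1,2)]) (use XN XCG in simp)
  have dir: "\<exists>z\<in>X. ple (preservants X) x z \<and> ple (preservants X) y z"
    if x: "x \<in> X" and y: "y \<in> X" for x y
  proof -
    define P where "P = preservants L"
    define P' where "P' = preservants L'"
    have xL: "x \<in> lin B F" "x \<in> lin B' F'" using x unfolding X_def BF(5) BF'(5) by auto
    obtain b where b: "b \<in> B" using xL(1) unfolding lin_def by auto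
    obtain b' where b': "b' \<in> B'" using xL(2) unfolding lin_def by auto
    have decX: "\<forall>x \<in> X. \<exists>c\<in>C. x - c \<in> Nspan F \<inter> Nspan F'"
      using dec unfolding X_def BF(5) BF'(5) .
    have decX': "\<forall>x \<in> X. \<exists>c\<in>C. x - c \<in> Nspan F' \<inter> Nspan F"
      using decX by (simp add: Int_commute)
    have nd: "zdim X = zdim L" "zdim X = zdim L'"
      using assms(5) unfolding nondegenerate_intersection_def X_def by auto
    have W1: "vec.span (to_rat ` (Nspan F \<inter> Nspan F')) = vec.span (to_rat ` F)"
      by (rule span_eq_W[OF BF(1) b BF(2) CG(1) decX]) (use nd BF(5) in simp)
    have W2: "vec.span (to_rat ` (Nspan F' \<inter> Nspan F)) = vec.span (to_rat ` F')"
      by (rule span_eq_W[OF BF'(1) b' BF'(2) CG(1) decX']) (use nd BF'(5) in simp)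
    obtain T0 where T0: "finite T0" "T0 \<subseteq> Nspan F \<inter> Nspan F'"
      "vec.span (to_rat ` T0) = vec.span (to_rat ` (Nspan F \<inter> Nspan F'))"
      using basis_T0 by blast
    have T0a: "vec.span (to_rat ` T0) = vec.span (to_rat ` F)" using T0(3) W1 by simp
    have T0b: "vec.span (to_rat ` T0) = vec.span (to_rat ` F')" using T0(3) W2 by (simp add: Int_commute)
    have T0c: "T0 \<subseteq> Nspan F' \<inter> Nspan F" using T0(2) by blast
    have NFP: "Nspan F \<subseteq> P" unfolding P_def BF(5) by (rule Nspan_pres)
    have NFP': "Nspan F' \<subseteq> P'" unfolding P'_def BF'(5) by (rule Nspan_pres)
    have transP: "\<exists>t\<in>P. v + t \<in> P'" if v: "v \<in> P" for v
    proof -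
      have vP: "v \<in> preservants (lin B F)" using v unfolding P_def BF(5) .
      obtain t where t: "t \<in> preservants (lin B F)" "v + t \<in> Nspan F \<inter> Nspan F'"
        using transfer_lemma[OF T0(1,2) BF(2) T0a vP BF(1) xL(1)] by blast
      then show ?thesis using NFP' unfolding P_def BF(5) by blast
    qed
    have transP': "\<exists>t\<in>P'. v + t \<in> P" if v: "v \<in> P'" for v
    proof -
      have vP: "v \<in> preservants (lin B' F')" using v unfolding P'_def BF'(5) .
      obtain t where t: "t \<in> preservants (lin B' F')" "v + t \<in> Nspan F' \<inter> Nspan F"
        using transfer_lemma[OF T0(1) T0c BF'(2) T0b vP BF'(1) xL(2)] by blast
      then show ?thesis using NFP unfolding P'_def BF'(5) by blast
    qed
    have yL: "y \<in> L" "y \<in> L'" using y unfolding X_def by auto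
    have xL': "x \<in> L" "x \<in> L'" using x unfolding X_def by auto
    obtain z1 where z1: "z1 \<in> L" "ple P x z1" "ple P y z1"
      using assms(3) xL'(1) yL(1) unfolding directed_hybridlinear_def P_def by blast
    obtain z2 where z2: "z2 \<in> L'" "ple P' x z2" "ple P' y z2"
      using assms(4) xL'(2) yL(2) unfolding directed_hybridlinear_def P'_def by blast
    define p1 where "p1 = z1 - x"
    define q1 where "q1 = z1 - y"
    define p2 where "p2 = z2 - x"
    define q2 where "q2 = z2 - y"
    have pq: "p1 \<in> P" "q1 \<in> P" "p2 \<in> P'" "q2 \<in> P'"
      using z1 z2 unfolding ple_def p1_def q1_def p2_def q2_def by auto
    have diff: "p1 - q1 = p2 - q2" unfolding p1_def q1_def p2_def q2_def by simp
    obtain t where t: "t \<in> P'" "q2 + t \<in> P" using transP'[OF pq(4)] by blast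
    obtain t' where t': "t' \<in> P" "q1 + t' \<in> P'" using transP[OF pq(2)] by blast
    have Padd: "u + w \<in> P" if "u \<in> P" "w \<in> P" for u w using that unfolding P_def by (rule pres_add)
    have P'add: "u + w \<in> P'" if "u \<in> P'" "w \<in> P'" for u w using that unfolding P'_def by (rule pres_add)
    define a where "a = p1 + q2 + t + t'"
    define c where "c = q1 + q2 + t + t'"
    have ac: "a \<in> P \<inter> P'" "c \<in> P \<inter> P'" "a - c = p1 - q1"
      unfolding a_def c_def using combine_dir[OF Padd P'add pq diff t t'] by auto
    have PQ: "P \<inter> P' \<subseteq> preservants X" unfolding P_def P'_def X_def by (rule pres_inter)
    define z where "z = x + a"
    have zc: "z = y + c"
    proof -
      have "a - c = y - x" using ac(3) unfolding p1_def q1_def by simp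
      then show ?thesis unfolding z_def by (simp add: algebra_simps)
    qed
    have aQ: "a \<in> preservants X" using ac(1) PQ by blast
    have cQ: "c \<in> preservants X" using ac(2) PQ by blast
    have zX: "z \<in> X" using aQ x unfolding z_def preservants_def by blast
    have "ple (preservants X) x z" unfolding ple_def z_def using aQ by simp
    moreover have "ple (preservants X) y z" unfolding ple_def zc using cQ by simp
    ultimately show ?thesis using zX by blast
  qed
  show ?thesis
    unfolding directed_hybridlinear_def X_def[symmetric]
    using hyb wqo dir by blast
qed


end
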